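(* Let $\mathcal{A}=\{A_1,\dots,A_m\}$ be a bimodal collection of pairwise disjoint nonempty subsets of a finite abelian group $G$, with internal difference groups $H_1,\dots,H_m$, labelled so that $|A_i|<|H_i|$ exactly for $i=1,\dots,r$, where $r\ge2$. Let $D=(a_1+H_1)\setminus A_1$, where $a_1+H_1$ is the coset of $H_1$ containing $A_1$, and suppose $\mathcal{A}$ is in canonical position, i.e. $D$ is a subgroup of $G$. Let $A=A_1\cup\dots\cup A_m$ and $H=H_1+\dots+H_r$. Then: (1) $H_1,\dots,H_r$ form an $r$-star with kernel $D$ (i.e. $H_i\cap H_j=D$ for all distinct $i,j\le r$), and $A_i=H_i\setminus D$ for each $1\le i\le r$; (2) every $A_i$ with $i>r$ is a coset of a subgroup of $D$; (3) $H\setminus D\subseteq A$, and the sets in $\mathcal{A}$ with index greater than $r$ can be relabelled so that for some $k$ with $r\le k\le m$ the set $H\setminus D$ is partitioned by $A_1,\dots,A_k$; (4) if $k<m$, then the sets $A_i$ with $i>k$ arise from a subdivision of cosets of $H$, i.e. their union is a union of cosets of $H$ and each of them is a coset of a subgroup of $G$ contained in a single coset of $H$.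
   Context: $G$ is written additively. The internal difference group $H_i$ of $A_i$ is the subgroup generated by all $x-y$ with $x,y\in A_i$; $A_i$ lies in a single coset of $H_i$ and $|A_i|\le|H_i|$. A collection $\{A_1,\dots,A_m\}$ of pairwise disjoint subsets of $G$ is bimodal if for every $i$ and every $\delta\in G\setminus\{0\}$, the number $N_i(\delta)$ of pairs $(a,b)$ with $a\in A_i$, $b\in A_j$ for some $j\neq i$, and $a-b=\delta$, satisfies $N_i(\delta)\in\{0,|A_i|\}$. (For such collections with $r\ge2$ the set $D$ equals $(a_i+H_i)\setminus A_i$ for every $i\le r$ and is a coset of a subgroup; canonical position means the collection has been translated so that $D$ is a subgroup.) *)

theory Defs
  imports Main
begin

definition add_subgrp :: "'a::ab_group_add set \<Rightarrow> bool" where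
  "add_subgrp K \<longleftrightarrow> 0 \<in> K \<and> (\<forall>x\<in>K. \<forall>y\<in>K. x - y \<in> K)"

definition gen_subgrp :: "'a::ab_group_add set \<Rightarrow> 'a set" where
  "gen_subgrp S = \<Inter>{K. add_subgrp K \<and> S \<subseteq> K}"

definition idg :: "'a::ab_group_add set \<Rightarrow> 'a set" where
  "idg X = gen_subgrp {x - y | x y. x \<in> X \<and> y \<in> X}"

definition transl :: "'a::ab_group_add \<Rightarrow> 'a set \<Rightarrow> 'a set" where
  "transl c K = (\<lambda>h. c + h) ` K"

definition is_coset_of :: "'a::ab_group_add set \<Rightarrow> 'a set \<Rightarrow> bool" where
  "is_coset_of X K \<longleftrightarrow> (\<exists>c. X = transl c K)"

definition Ncount :: "(nat \<Rightarrow> 'a::ab_group_add set) \<Rightarrow> nat \<Rightarrow> nat \<Rightarrow> 'a \<Rightarrow> nat" where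
  "Ncount A m i \<delta> = card {(a, b). a \<in> A i \<and> (\<exists>j\<in>{1..m}. j \<noteq> i \<and> b \<in> A j) \<and> a - b = \<delta>}"

definition bimodal :: "(nat \<Rightarrow> 'a::ab_group_add set) \<Rightarrow> nat \<Rightarrow> bool" where
  "bimodal A m \<longleftrightarrow> (\<forall>i\<in>{1..m}. \<forall>\<delta>. \<delta> \<noteq> 0 \<longrightarrow> Ncount A m i \<delta> \<in> {0, card (A i)})"

definition sumset :: "(nat \<Rightarrow> 'a::ab_group_add set) \<Rightarrow> nat \<Rightarrow> 'a set" where
  "sumset H r = {\<Sum>i\<in>{1..r}. h i | h. \<forall>i\<in>{1..r}. h i \<in> H i}"

end

theory Submission imports Defs begin

lemma subgrp_0: "add_subgrp K \<Longrightarrow> 0 \<in> K" by (simp add: add_subgrp_def)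
lemma subgrp_diff: "add_subgrp K \<Longrightarrow> a \<in> K \<Longrightarrow> b \<in> K \<Longrightarrow> a - b \<in> K"
  by (simp add: add_subgrp_def)
lemma subgrp_neg: "add_subgrp K \<Longrightarrow> a \<in> K \<Longrightarrow> - a \<in> K"
  using subgrp_diff[of K 0 a] subgrp_0[of K] by simp
lemma subgrp_add: "add_subgrp K \<Longrightarrow> a \<in> K \<Longrightarrow> b \<in> K \<Longrightarrow> a + b \<in> K"
  using subgrp_diff[of K a "- b"] subgrp_neg[of K b] by simp

lemma add_subgrp_idg: "add_subgrp (idg X)"
  unfolding idg_def gen_subgrp_def add_subgrp_def by auto

lemma idg_diff: "x \<in> X \<Longrightarrow> y \<in> X \<Longrightarrow> x - y \<in> idg X"
  unfolding idg_def gen_subgrp_def by blast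

lemma gen_subgrp_least: "add_subgrp K \<Longrightarrow> S \<subseteq> K \<Longrightarrow> gen_subgrp S \<subseteq> K"
  unfolding gen_subgrp_def by blast

lemma card_transl: "card (transl c K) = card K"
  unfolding transl_def by (rule card_image) (simp add: inj_on_def)

lemma mem_transl: "y \<in> transl c K \<longleftrightarrow> y - c \<in> K"
  unfolding transl_def by (auto simp: image_iff) (metis add.commute diff_add_cancel)

lemma sum_step_induct:
  fixes g :: "nat \<Rightarrow> 'a::ab_group_add"
  assumes "P x" and "\<And>i v h. i \<in> {1..r} \<Longrightarrow> h \<in> H i \<Longrightarrow> P v \<Longrightarrow> P (v + h)"
    and "\<forall>i\<in>{1..r}. g i \<in> H i"
  shows "P (x + sum g {1..r})"
proof -
  have "t \<le> r \<Longrightarrow> P (x + sum g {1..t})" for t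
  proof (induction t)
    case 0 then show ?case using assms(1) by simp
  next
    case (Suc t)
    have "x + sum g {1..Suc t} = (x + sum g {1..t}) + g (Suc t)"
      by (simp add: add.assoc)
    moreover have "P ((x + sum g {1..t}) + g (Suc t))"
      using Suc assms(2)[of "Suc t" "g (Suc t)" "x + sum g {1..t}"] assms(3) by simp
    ultimately show ?case by metis
  qed
  then show ?thesis by simp
qed

theorem theorem3p10:
  fixes A :: "nat \<Rightarrow> 'a::{finite, ab_group_add} set"
    and m r :: nat and a1 :: 'a
  defines "H \<equiv> \<lambda>i. idg (A i)"
  defines "D \<equiv> transl a1 (H 1) - A 1"
  defines "HH \<equiv> sumset H r"
  assumes disj: "\<forall>i\<in>{1..m}. \<forall>j\<in>{1..m}. i \<noteq> j \<longrightarrow> A i \<inter> A j = {}"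
    and nonempty: "\<forall>i\<in>{1..m}. A i \<noteq> {}"
    and bim: "bimodal A m"
    and r2: "2 \<le> r" and rm: "r \<le> m"
    and label: "\<forall>i\<in>{1..m}. (card (A i) < card (H i) \<longleftrightarrow> i \<le> r)"
    and a1: "a1 \<in> A 1"
    and canon: "add_subgrp D"
  shows "(\<forall>i\<in>{1..r}. \<forall>j\<in>{1..r}. i \<noteq> j \<longrightarrow> H i \<inter> H j = D)
       \<and> (\<forall>i\<in>{1..r}. A i = H i - D)
       \<and> (\<forall>i\<in>{r<..m}. \<exists>K. add_subgrp K \<and> K \<subseteq> D \<and> is_coset_of (A i) K)
       \<and> HH - D \<subseteq> (\<Union>i\<in>{1..m}. A i)
       \<and> (\<exists>\<sigma> k. bij_betw \<sigma> {1..m} {1..m} \<and> (\<forall>i\<in>{1..r}. \<sigma> i = i)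
              \<and> r \<le> k \<and> k \<le> m
              \<and> (\<Union>i\<in>{1..k}. A (\<sigma> i)) = HH - D
              \<and> (k < m \<longrightarrow>
                   (\<forall>x\<in>(\<Union>i\<in>{k<..m}. A (\<sigma> i)). transl x HH \<subseteq> (\<Union>i\<in>{k<..m}. A (\<sigma> i)))
                 \<and> (\<forall>i\<in>{k<..m}. \<exists>K c. add_subgrp K \<and> is_coset_of (A (\<sigma> i)) K
                                     \<and> A (\<sigma> i) \<subseteq> transl c HH)))"
proof -
  have fin: "finite (S :: 'a set)" for S by simp
  define U where "U = (\<Union>i\<in>{1..m}. A i)"
  have Hs: "add_subgrp (H i)" for i unfolding H_def by (rule add_subgrp_idg)
  have H0: "0 \<in> H i" for i using Hs subgrp_0 by blast
  have Hd: "a \<in> H i \<Longrightarrow> b \<in> H i \<Longrightarrow> a - b \<in> H i" for a b i using Hs subgrp_diff by blast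
  have Hn: "a \<in> H i \<Longrightarrow> - a \<in> H i" for a i using Hs subgrp_neg by blast
  have Ha: "a \<in> H i \<Longrightarrow> b \<in> H i \<Longrightarrow> a + b \<in> H i" for a b i using Hs subgrp_add by blast
  have Ad: "x \<in> A i \<Longrightarrow> y \<in> A i \<Longrightarrow> y - x \<in> H i" for x y i
    unfolding H_def by (rule idg_diff)
  have AU: "i \<in> {1..m} \<Longrightarrow> A i \<subseteq> U" for i unfolding U_def by blast
  have Adj: "i \<in> {1..m} \<Longrightarrow> j \<in> {1..m} \<Longrightarrow> i \<noteq> j \<Longrightarrow> x \<in> A i \<Longrightarrow> x \<notin> A j" for i j x
    using disj by blast
  have F0: "b + (y - x) \<in> U \<and> b + (y - x) \<notin> A i"
    if i: "i \<in> {1..m}" and b: "b \<in> U" "b \<notin> A i" and x: "x \<in> A i" and y: "y \<in> A i" for i b x y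
  proof -
    define \<delta> where "\<delta> = x - b"
    define S where "S = {(a, b'). a \<in> A i \<and> (\<exists>j\<in>{1..m}. j \<noteq> i \<and> b' \<in> A j) \<and> a - b' = \<delta>}"
    have NS: "Ncount A m i \<delta> = card S" by (simp add: Ncount_def S_def)
    have "\<delta> \<noteq> 0" using x b unfolding \<delta>_def by auto
    obtain j where j: "j \<in> {1..m}" "b \<in> A j" using b unfolding U_def by blast
    have "j \<noteq> i" using j b by blast
    have "(x, b) \<in> S" unfolding S_def \<delta>_def using x j \<open>j \<noteq> i\<close> by blast
    have finS: "finite S" by simp
    have "card S \<noteq> 0" using \<open>(x, b) \<in> S\<close> finS by auto
    moreover have "card S \<in> {0, card (A i)}" using bim i \<open>\<delta> \<noteq> 0\<close> NS unfolding bimodal_def by metis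
    ultimately have cS: "card S = card (A i)" by simp
    have inj: "inj_on fst S" unfolding S_def inj_on_def by auto
    have sub: "fst ` S \<subseteq> A i" unfolding S_def by auto
    have "card (fst ` S) = card (A i)" using inj cS by (simp add: card_image)
    then have "fst ` S = A i" using sub by (intro card_subset_eq) auto
    then obtain b'' where "(y, b'') \<in> S" using y by force
    then obtain j' where j': "j' \<in> {1..m}" "j' \<noteq> i" "b'' \<in> A j'" and e: "y - b'' = \<delta>"
      unfolding S_def by blast
    have "b'' = b + (y - x)" using e unfolding \<delta>_def by (simp add: algebra_simps)
    then show ?thesis using j' AU Adj i by blast
  qed
  have F1: "b + h \<in> U \<and> b + h \<notin> A i"
    if i: "i \<in> {1..m}" and b: "b \<in> U" "b \<notin> A i" and h: "h \<in> H i" for i b h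
  proof -
    define B where "B = U - A i"
    define St where "St = {g. \<forall>c\<in>B. c + g \<in> B}"
    have "add_subgrp St"
      unfolding add_subgrp_def
    proof (intro conjI ballI)
      show "0 \<in> St" unfolding St_def by simp
      fix g1 g2 assume g1: "g1 \<in> St" and g2: "g2 \<in> St"
      have im: "(\<lambda>c. c + g2) ` B = B"
      proof (rule card_subset_eq)
        show "finite B" by simp
        show "(\<lambda>c. c + g2) ` B \<subseteq> B" using g2 unfolding St_def by auto
        show "card ((\<lambda>c. c + g2) ` B) = card B" by (rule card_image) (simp add: inj_on_def)
      qed
      show "g1 - g2 \<in> St" unfolding St_def
      proof (rule CollectI, rule ballI)
        fix c assume "c \<in> B"
        then obtain c' where "c' \<in> B" "c = c' + g2" using im by (metis imageE)
        moreover have "c + (g1 - g2) = c' + g1" using \<open>c = c' + g2\<close> by (simp add: algebra_simps)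
        ultimately show "c + (g1 - g2) \<in> B" using g1 unfolding St_def by simp
      qed
    qed
    moreover have "{x - y | x y. x \<in> A i \<and> y \<in> A i} \<subseteq> St"
      unfolding St_def B_def using F0[OF i] by auto
    ultimately have "H i \<subseteq> St" unfolding H_def idg_def by (rule gen_subgrp_least)
    then show ?thesis using h b unfolding St_def B_def by blast
  qed
  have Zl: "z + g \<in> A i" if i: "i \<in> {1..m}" and "z \<notin> U" "g \<in> H i" "z + g \<in> U" for i z g
  proof (rule ccontr)
    assume "z + g \<notin> A i"
    then have "(z + g) + (- g) \<in> U" using F1[OF i \<open>z + g \<in> U\<close> _ Hn[OF \<open>g \<in> H i\<close>]] by blast
    then show False using \<open>z \<notin> U\<close> by simp
  qed
  have F2: "y \<in> A i" if i: "i \<in> {1..m}" and "x \<in> A i" "y \<in> U" "y - x \<in> H i" for i x y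
  proof (rule ccontr)
    assume "y \<notin> A i"
    then have "y + (x - y) \<notin> A i" using F1[OF i \<open>y \<in> U\<close> _ Hn[OF \<open>y - x \<in> H i\<close>]] by simp
    then show False using \<open>x \<in> A i\<close> by simp
  qed
  have m1: "1 \<in> {1..m}" using r2 rm by simp
  have "0 \<in> D" using canon subgrp_0 by blast
  then obtain h0 where "h0 \<in> H 1" "a1 + h0 = 0" unfolding D_def transl_def by auto
  then have a1H: "a1 \<in> H 1" using Hn by (metis add.commute add_eq_0_iff)
  have "transl a1 (H 1) = H 1" unfolding mem_transl set_eq_iff using a1H Hd Ha
    by (metis diff_add_cancel)
  then have Ddef: "D = H 1 - A 1" unfolding D_def by simp
  have A1H: "A 1 \<subseteq> H 1" using Ad[OF a1] Ha[OF a1H] by (metis add.commute diff_add_cancel subsetI)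
  have U0: "0 \<notin> U"
  proof
    assume "0 \<in> U"
    then have "0 \<in> A 1" using F2[OF m1 a1 _ ] Hn[OF a1H] by simp
    then show False using \<open>0 \<in> D\<close> Ddef by simp
  qed
  have DU: "d \<in> D \<Longrightarrow> d \<notin> U" for d
    using F2[OF m1 a1, of d] Hd[OF _ a1H, of d] Ddef by auto
  have UH: "y \<in> A i" if i: "i \<in> {1..m}" and "A i \<subseteq> H i" "y \<in> U" "y \<in> H i" for i y
  proof -
    obtain x where "x \<in> A i" using nonempty i by blast
    then show ?thesis using F2[OF i \<open>x \<in> A i\<close> \<open>y \<in> U\<close>] Hd \<open>A i \<subseteq> H i\<close> \<open>y \<in> H i\<close> by blast
  qed
  have L0: "k \<in> D"
    if ij: "i \<in> {1..m}" "j \<in> {1..m}" "i \<noteq> j" and ci: "A i \<subseteq> H i" "H i - A i = D"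
      and k: "k \<in> H i" "k \<in> H j" for i j k
  proof (rule ccontr)
    assume "k \<notin> D"
    then have "k \<in> A i" using ci k by blast
    then have "k + (- k) \<in> U" using F1[OF ij(2) _ _ Hn[OF k(2)]] AU[OF ij(1)] Adj[OF ij] by blast
    then show False using U0 by simp
  qed
  have L1: "A j \<subseteq> H j"
    if ij: "i \<in> {1..m}" "j \<in> {1..m}" "i \<noteq> j" and ci: "A i \<subseteq> H i" "H i - A i = D"
      and jr: "j \<le> r" for i j
  proof -
    obtain x where x: "x \<in> A j" using nonempty ij by blast
    have "x \<in> H j"
    proof (rule ccontr)
      assume xn: "x \<notin> H j"
      have HjU: "u \<notin> U" if "u \<in> H j" for u
      proof
        assume "u \<in> U"
        show False
        proof (cases "u \<in> A j")
          case True
          then have "x - u \<in> H j" using Ad x by blast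
          then have "u + (x - u) \<in> H j" using Ha \<open>u \<in> H j\<close> by blast
          then show False using xn by simp
        next
          case False
          then have "u + (- u) \<in> U" using F1[OF ij(2) \<open>u \<in> U\<close> _ Hn[OF \<open>u \<in> H j\<close>]] by blast
          then show False using U0 by simp
        qed
      qed
      show False
      proof (cases "H j \<subseteq> H i")
        case False
        then obtain h where h: "h \<in> H j" "h \<notin> H i" by blast
        obtain y where y: "y \<in> A i" using nonempty ij by blast
        have "y + h \<in> U" using F1[OF ij(2) _ _ h(1)] AU[OF ij(1)] Adj[OF ij] y by blast
        then have "h + y \<in> U" by (simp add: add.commute)
      then have "h + y \<in> A i" using Zl[OF ij(1) HjU[OF h(1)] _] ci(1) y by blast
        then have "(h + y) - y \<in> H i" using Hd ci(1) y by blast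
        then show False using h by simp
      next
        case True
        have "transl x (H j) \<subseteq> A j"
        proof
          fix z assume "z \<in> transl x (H j)"
          then have zx: "z - x \<in> H j" by (simp add: mem_transl)
          have "x + (z - x) \<in> U" using F1[OF ij(1) _ _, of x "z - x"] True zx AU[OF ij(2)] x Adj ij by blast
          then show "z \<in> A j" using F2[OF ij(2) x _ zx] by simp
        qed
        then have "card (H j) \<le> card (A j)" using card_transl[of x "H j"] card_mono[of "A j" "transl x (H j)"] by simp
        then show False using label ij jr by fastforce
      qed
    qed
    then show ?thesis using Ad[OF x] Ha by (metis add.commute diff_add_cancel subsetI)
  qed
  have L2: "H j - A j = D"
    if ij: "i \<in> {1..m}" "j \<in> {1..m}" "i \<noteq> j" and ci: "A i \<subseteq> H i" "H i - A i = D"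
      and cj: "A j \<subseteq> H j" for i j
  proof -
    have DHj: "d \<in> H j" if d: "d \<in> D" for d
    proof (rule ccontr)
      assume dn: "d \<notin> H j"
      obtain x where x: "x \<in> A j" using nonempty ij by blast
      have "x + d \<in> U" using F1[OF ij(1) _ _, of x d] AU[OF ij(2)] x Adj ij d ci by blast
      then have "d + x \<in> A j" using Zl[OF ij(2) DU[OF d], of x] cj x by (simp add: add.commute subset_iff)
      then have "(d + x) - x \<in> H j" using Hd cj x by blast
      then show False using dn by simp
    qed
    have eD: "e \<in> D" if e: "e \<in> H j" "e \<notin> A j" for e
    proof -
      have eU: "e \<notin> U" using UH[OF ij(2) cj _ e(1)] e(2) by blast
      have "e \<in> H i"
      proof (rule ccontr)
        assume en: "e \<notin> H i"
        obtain y where y: "y \<in> A i" using nonempty ij by blast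
        have "y + e \<in> U" using F1[OF ij(2) _ _ e(1)] AU[OF ij(1)] Adj[OF ij] y by blast
        then have "e + y \<in> U" by (simp add: add.commute)
      then have "e + y \<in> A i" using Zl[OF ij(1) eU _] ci(1) y by blast
        then have "(e + y) - y \<in> H i" using Hd ci(1) y by blast
        then show False using en by simp
      qed
      then show ?thesis using L0[OF ij ci] e by blast
    qed
    show ?thesis using DHj eD DU AU[OF ij(2)] by blast
  qed
  have Acos: "A j = transl x (H j)" if j: "j \<in> {1..m}" "r < j" and x: "x \<in> A j" for j x
  proof -
    have sub: "A j \<subseteq> transl x (H j)" using Ad[OF x] by (auto simp: mem_transl)
    have "\<not> card (A j) < card (H j)" using label j by auto
    then have "card (transl x (H j)) \<le> card (A j)" by (simp add: card_transl)
    then show ?thesis using sub by (intro card_seteq) auto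
  qed
  have L3: "H j \<subseteq> D"
    if ij: "i \<in> {1..m}" "j \<in> {1..m}" "i \<noteq> j" and ci: "A i \<subseteq> H i" "H i - A i = D"
      and jr: "r < j" for i j
  proof
    fix h assume h: "h \<in> H j"
    show "h \<in> D"
    proof (cases "h \<in> H i")
      case True then show ?thesis using L0[OF ij ci] h by blast
    next
      case False
      obtain x where x: "x \<in> A j" using nonempty ij by blast
      have hU: "h \<notin> U"
      proof
        assume "h \<in> U"
        show False
        proof (cases "h \<in> A j")
          case True
          then have "h - x \<in> H j" using Ad x by blast
          then have "h - (h - x) \<in> H j" using Hd h by blast
          then have "- x \<in> H j" using Hn by simp
          then have "0 \<in> A j" using Acos[OF ij(2) jr x] by (simp add: mem_transl)
          then show False using U0 AU ij by blast
        next
          case False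
          then have "h + (- h) \<in> U" using F1[OF ij(2) \<open>h \<in> U\<close> _ Hn[OF h]] by blast
          then show False using U0 by simp
        qed
      qed
      obtain y where y: "y \<in> A i" using nonempty ij by blast
      have "y + h \<in> U" using F1[OF ij(2) _ _ h] AU[OF ij(1)] Adj[OF ij] y by blast
      then have "h + y \<in> U" by (simp add: add.commute)
      then have "h + y \<in> A i" using Zl[OF ij(1) hU _] ci(1) y by blast
      then have "(h + y) - y \<in> H i" using Hd ci(1) y by blast
      then show ?thesis using False by simp
    qed
  qed
  have canj: "A j \<subseteq> H j \<and> H j - A j = D" if j: "j \<in> {1..r}" for j
  proof (cases "j = 1")
    case True then show ?thesis using A1H Ddef by simp
  next
    case False
    have jm: "j \<in> {1..m}" using j rm by simp
    have c: "A j \<subseteq> H j" using L1[OF m1 jm _ A1H Ddef[symmetric]] False j by auto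
    then show ?thesis using L2[OF m1 jm _ A1H Ddef[symmetric] c] False by auto
  qed
  have c1: "\<forall>i\<in>{1..r}. \<forall>j\<in>{1..r}. i \<noteq> j \<longrightarrow> H i \<inter> H j = D"
  proof (intro ballI impI)
    fix i j assume i: "i \<in> {1..r}" and j: "j \<in> {1..r}" and ne: "i \<noteq> j"
    have im: "i \<in> {1..m}" "j \<in> {1..m}" using i j rm by auto
    show "H i \<inter> H j = D" using L0[OF im ne] canj[OF i] canj[OF j] by blast
  qed
  have c2: "\<forall>i\<in>{1..r}. A i = H i - D" using canj by blast
  have c3: "\<forall>i\<in>{r<..m}. \<exists>K. add_subgrp K \<and> K \<subseteq> D \<and> is_coset_of (A i) K"
  proof
    fix i assume i: "i \<in> {r<..m}"
    have im: "i \<in> {1..m}" "r < i" using i r2 by auto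
    obtain x where x: "x \<in> A i" using nonempty im by blast
    have "H i \<subseteq> D" using L3[OF m1 im(1) _ A1H Ddef[symmetric] im(2)] im r2 by auto
    then show "\<exists>K. add_subgrp K \<and> K \<subseteq> D \<and> is_coset_of (A i) K"
      using Hs Acos[OF im x] unfolding is_coset_of_def by blast
  qed
  have HHm: "s \<in> HH \<longleftrightarrow> (\<exists>g. s = sum g {1..r} \<and> (\<forall>i\<in>{1..r}. g i \<in> H i))" for s
    unfolding HH_def sumset_def by blast
  have HHd: "a - b \<in> HH" if ab: "a \<in> HH" "b \<in> HH" for a b
  proof -
    obtain g where g: "a = sum g {1..r}" "\<forall>i\<in>{1..r}. g i \<in> H i" using ab(1) unfolding HHm by blast
    obtain g' where g': "b = sum g' {1..r}" "\<forall>i\<in>{1..r}. g' i \<in> H i" using ab(2) unfolding HHm by blast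
    have "a - b = sum (\<lambda>i. g i - g' i) {1..r}" using g g' by (simp add: sum_subtractf)
    moreover have "\<forall>i\<in>{1..r}. g i - g' i \<in> H i" using g g' Hd by blast
    ultimately show ?thesis unfolding HHm by blast
  qed
  have HHj: "h \<in> HH" if "j \<in> {1..r}" "h \<in> H j" for j h
  proof -
    have "h = sum (\<lambda>i. if i = j then h else 0) {1..r}" using that by simp
    moreover have "\<forall>i\<in>{1..r}. (if i = j then h else 0) \<in> H i" using that H0 by simp
    ultimately show ?thesis unfolding HHm by blast
  qed
  have r1: "1 \<in> {1..r}" using r2 by simp
  have DHH: "D \<subseteq> HH" using HHj[OF r1] Ddef by blast
  have HHDU: "s \<in> D \<union> U" if sH: "s \<in> HH" for s
  proof -
    obtain g where g: "s = sum g {1..r}" "\<forall>i\<in>{1..r}. g i \<in> H i" using sH unfolding HHm by blast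
    have "0 + sum g {1..r} \<in> D \<union> U"
    proof (rule sum_step_induct[where P = "\<lambda>v. v \<in> D \<union> U" and H = H])
      show "0 \<in> D \<union> U" using \<open>0 \<in> D\<close> by simp
      show "\<forall>i\<in>{1..r}. g i \<in> H i" by fact
      fix i v h assume i: "i \<in> {1..r}" and h: "h \<in> H i" and v: "v \<in> D \<union> U"
      have im: "i \<in> {1..m}" using i rm by auto
      show "v + h \<in> D \<union> U"
      proof (cases "v \<in> H i")
        case True
        then have "v + h \<in> H i" using Ha h by blast
        then show ?thesis using canj[OF i] AU[OF im] by blast
      next
        case False
        then have "v \<in> U" "v \<notin> A i" using v canj[OF i] by blast+
        then show ?thesis using F1[OF im _ _ h] by blast
      qed
    qed
    then show ?thesis using g by simp
  qed
  have c4: "HH - D \<subseteq> (\<Union>i\<in>{1..m}. A i)" using HHDU unfolding U_def by blast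
  define Sin where "Sin = {j \<in> {r<..m}. A j \<subseteq> HH}"
  define Sout where "Sout = {j \<in> {r<..m}. \<not> A j \<subseteq> HH}"
  have Acos2: "A j \<subseteq> HH \<longleftrightarrow> x \<in> HH" if j: "j \<in> {r<..m}" and x: "x \<in> A j" for j x
  proof
    assume "A j \<subseteq> HH" then show "x \<in> HH" using x by blast
  next
    assume xH: "x \<in> HH"
    have jm: "j \<in> {1..m}" "r < j" using j r2 by auto
    have HjD: "H j \<subseteq> D" using c3 j Acos[OF jm x] x
      using L3[OF m1 jm(1) _ A1H Ddef[symmetric] jm(2)] jm r2 by auto
    show "A j \<subseteq> HH"
    proof
      fix y assume "y \<in> A j"
      then have "y - x \<in> HH" using Ad[OF x] HjD DHH by blast
      moreover have "0 \<in> HH" using HHd[OF xH xH] by simp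
      ultimately have "0 - (y - x) \<in> HH" using HHd by blast
      then have "x - (0 - (y - x)) \<in> HH" using HHd xH by blast
      then show "y \<in> HH" by simp
    qed
  qed
  have U1: "(\<Union>j\<in>{1..r} \<union> Sin. A j) = HH - D"
  proof
    show "(\<Union>j\<in>{1..r} \<union> Sin. A j) \<subseteq> HH - D"
    proof
      fix y assume "y \<in> (\<Union>j\<in>{1..r} \<union> Sin. A j)"
      then obtain j where j: "j \<in> {1..r} \<union> Sin" "y \<in> A j" by blast
      then have jm: "j \<in> {1..m}" using rm unfolding Sin_def by auto
      have "y \<notin> D" using DU AU[OF jm] j by blast
      moreover have "y \<in> HH"
      proof (cases "j \<in> {1..r}")
        case True then show ?thesis using canj HHj j by blast
      next
        case False then show ?thesis using j unfolding Sin_def by blast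
      qed
      ultimately show "y \<in> HH - D" by blast
    qed
  next
    show "HH - D \<subseteq> (\<Union>j\<in>{1..r} \<union> Sin. A j)"
    proof
      fix y assume y: "y \<in> HH - D"
      then have "y \<in> U" using HHDU by blast
      then obtain j where j: "j \<in> {1..m}" "y \<in> A j" unfolding U_def by blast
      show "y \<in> (\<Union>j\<in>{1..r} \<union> Sin. A j)"
      proof (cases "j \<le> r")
        case True then show ?thesis using j by auto
      next
        case False
        then have "j \<in> {r<..m}" using j by auto
        then have "j \<in> Sin" using Acos2[OF _ j(2)] y unfolding Sin_def by blast
        then show ?thesis using j by blast
      qed
    qed
  qed
  have U2: "(\<Union>j\<in>Sout. A j) = U - HH"
  proof
    show "(\<Union>j\<in>Sout. A j) \<subseteq> U - HH"
    proof
      fix y assume "y \<in> (\<Union>j\<in>Sout. A j)"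
      then obtain j where j: "j \<in> Sout" "y \<in> A j" by blast
      then have "j \<in> {r<..m}" "\<not> A j \<subseteq> HH" unfolding Sout_def by auto
      then have "y \<notin> HH" using Acos2[OF _ j(2)] by blast
      moreover have "j \<in> {1..m}" using \<open>j \<in> {r<..m}\<close> r2 by auto
      ultimately show "y \<in> U - HH" using AU j(2) by blast
    qed
  next
    show "U - HH \<subseteq> (\<Union>j\<in>Sout. A j)"
    proof
      fix y assume y: "y \<in> U - HH"
      then obtain j where j: "j \<in> {1..m}" "y \<in> A j" unfolding U_def by blast
      show "y \<in> (\<Union>j\<in>Sout. A j)"
      proof (cases "j \<le> r")
        case True then show ?thesis using j canj HHj y by fastforce
      next
        case False
        then have "j \<in> {r<..m}" using j by auto
        then have "j \<in> Sout" using y j unfolding Sout_def by blast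
        then show ?thesis using j by blast
      qed
    qed
  qed
  have per: "x + s \<in> U - HH" if x: "x \<in> U - HH" and s: "s \<in> HH" for x s
  proof -
    obtain g where g: "s = sum g {1..r}" "\<forall>i\<in>{1..r}. g i \<in> H i" using s unfolding HHm by blast
    have "x + sum g {1..r} \<in> U - HH"
    proof (rule sum_step_induct[where P = "\<lambda>v. v \<in> U - HH" and H = H])
      show "x \<in> U - HH" by fact
      show "\<forall>i\<in>{1..r}. g i \<in> H i" by fact
      fix i v h assume i: "i \<in> {1..r}" and h: "h \<in> H i" and v: "v \<in> U - HH"
      have im: "i \<in> {1..m}" using i rm by auto
      have hH: "h \<in> HH" using HHj i h by blast
      have "v \<notin> A i" using v canj[OF i] HHj[OF i] by blast
      then have "v + h \<in> U" using F1[OF im _ _ h] v by blast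
      moreover have "v + h \<notin> HH"
      proof
        assume "v + h \<in> HH"
        then have "(v + h) - h \<in> HH" using HHd hH by blast
        then show False using v by simp
      qed
      ultimately show "v + h \<in> U - HH" by blast
    qed
    then show ?thesis using g by simp
  qed
  define k where "k = r + card Sin"
  have SU: "Sin \<union> Sout = {r<..m}" "Sin \<inter> Sout = {}" unfolding Sin_def Sout_def by auto
  have finS: "finite Sin" "finite Sout" unfolding Sin_def Sout_def by auto
  have cc: "card Sin + card Sout = m - r"
    using card_Un_disjoint[of Sin Sout] SU finS by simp
  have rk: "r \<le> k" "k \<le> m" unfolding k_def using cc rm by auto
  obtain f1 where f1: "bij_betw f1 {r<..k} Sin"
    using finite_same_card_bij[of "{r<..k}" Sin] finS unfolding k_def by auto
  obtain f2 where f2: "bij_betw f2 {k<..m} Sout"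
  proof -
    have "card {k<..m} = card Sout" using cc rk unfolding k_def by simp
    then show ?thesis using finite_same_card_bij[of "{k<..m}" Sout] finS that by auto
  qed
  define \<sigma> where "\<sigma> = (\<lambda>i. if i \<le> r then i else if i \<le> k then f1 i else f2 i)"
  have b0: "bij_betw \<sigma> {1..r} {1..r}"
    by (rule bij_betw_cong[THEN iffD1, OF _ bij_betw_id]) (auto simp: \<sigma>_def)
  have b1: "bij_betw \<sigma> {r<..k} Sin"
    by (rule bij_betw_cong[THEN iffD1, OF _ f1]) (auto simp: \<sigma>_def)
  have b2: "bij_betw \<sigma> {k<..m} Sout"
    by (rule bij_betw_cong[THEN iffD1, OF _ f2]) (use rk in \<open>auto simp: \<sigma>_def\<close>)
  have b01: "bij_betw \<sigma> ({1..r} \<union> {r<..k}) ({1..r} \<union> Sin)"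
    by (rule bij_betw_combine[OF b0 b1]) (auto simp: Sin_def)
  have b012: "bij_betw \<sigma> ({1..r} \<union> {r<..k} \<union> {k<..m}) ({1..r} \<union> Sin \<union> Sout)"
    by (rule bij_betw_combine[OF b01 b2]) (auto simp: Sin_def Sout_def)
  have e1: "{1..r} \<union> {r<..k} = {1..k}" using rk r2 by auto
  have e2: "{1..k} \<union> {k<..m} = {1..m}" using rk by auto
  have e3: "{1..r} \<union> Sin \<union> Sout = {1..m}"
  proof -
    have "{1..r} \<union> Sin \<union> Sout = {1..r} \<union> {r<..m}" using SU(1) by (simp add: Un_assoc)
    also have "\<dots> = {1..m}" using rm r2 by auto
    finally show ?thesis .
  qed
  have bij: "bij_betw \<sigma> {1..m} {1..m}" using b012 e1 e2 e3 by simp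
  have im1: "\<sigma> ` {1..k} = {1..r} \<union> Sin" using b01 e1 by (simp add: bij_betw_def)
  have im2: "\<sigma> ` {k<..m} = Sout" using b2 by (simp add: bij_betw_def)
  have UI: "(\<Union>i\<in>I. A (\<sigma> i)) = (\<Union>j\<in>\<sigma> ` I. A j)" for I by auto
  have c5: "(\<Union>i\<in>{1..k}. A (\<sigma> i)) = HH - D" unfolding UI[of "{1..k}"] im1 U1 by (rule refl)
  have c6: "(\<Union>i\<in>{k<..m}. A (\<sigma> i)) = U - HH" unfolding UI[of "{k<..m}"] im2 U2 by (rule refl)
  have c7: "\<forall>i\<in>{k<..m}. \<exists>K c. add_subgrp K \<and> is_coset_of (A (\<sigma> i)) K \<and> A (\<sigma> i) \<subseteq> transl c HH"
  proof
    fix i assume i: "i \<in> {k<..m}"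
    then have si: "\<sigma> i \<in> {r<..m}" using im2 unfolding Sout_def by blast
    then have sm: "\<sigma> i \<in> {1..m}" "r < \<sigma> i" using r2 by auto
    obtain x where x: "x \<in> A (\<sigma> i)" using nonempty sm by blast
    have HD: "H (\<sigma> i) \<subseteq> D" using L3[OF m1 sm(1) _ A1H Ddef[symmetric] sm(2)] sm r2 by auto
    have "A (\<sigma> i) \<subseteq> transl x HH"
      using Acos[OF sm x] HD DHH by (auto simp: mem_transl subset_iff)
    then show "\<exists>K c. add_subgrp K \<and> is_coset_of (A (\<sigma> i)) K \<and> A (\<sigma> i) \<subseteq> transl c HH"
      using Hs Acos[OF sm x] unfolding is_coset_of_def by blast
  qed
  have c8: "\<forall>x\<in>(\<Union>i\<in>{k<..m}. A (\<sigma> i)). transl x HH \<subseteq> (\<Union>i\<in>{k<..m}. A (\<sigma> i))"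
    unfolding c6 using per by (auto simp: transl_def)
  have "\<forall>i\<in>{1..r}. \<sigma> i = i" by (simp add: \<sigma>_def)
  then show ?thesis using c1 c2 c3 c4 c5 c7 c8 bij rk by blast
qed

end
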